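(* The Euler–Mascheroni constant $\gamma$ satisfies $$\gamma=1-\frac12\ln 2-\sum_{n=2}^{\infty}\left(\operatorname{arctanh}\!\left(\frac1n\right)-\frac1n\right).$$
   Context: $\gamma=\lim_{N\to\infty}\left(\sum_{n=1}^N\frac1n-\ln N\right)$ is the Euler–Mascheroni constant. *)

theory Defs
  imports "HOL-Analysis.Analysis"
begin

end

theory Submission
  imports Defs "HOL-Real_Asymp.Real_Asymp"
begin

lemma artanh_term:
  "artanh (1 / real (k + 2)) = (ln (real k + 3) - ln (real k + 1)) / 2"
proof -
  have "(1 + 1 / real (k + 2)) / (1 - 1 / real (k + 2)) = (real k + 3) / (real k + 1)"
  proof -
    have a: "real (k+2) > 0" by simp
    have "1 + 1 / real (k + 2) = (real k + 3) / real (k+2)" using a by (simp add: field_simps)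
    moreover have "1 - 1 / real (k + 2) = (real k + 1) / real (k+2)" using a by (simp add: field_simps)
    ultimately show ?thesis using a by simp
  qed
  then show ?thesis unfolding artanh_def by (simp add: ln_div)
qed

lemma partial:
  "(\<Sum>n<m. artanh (1 / real (n + 2)) - 1 / real (n + 2)) =
     (ln (real m + 1) + ln (real m + 2)) / 2 - ln 2 / 2 - (harm (m + 1) - 1)"
proof (induction m)
  case 0
  then show ?case by (simp add: harm_def)
next
  case (Suc m)
  have h: "harm (Suc (Suc m)) = harm (Suc m) + 1 / (real m + 2)"
    by (simp add: harm_Suc inverse_eq_divide add_ac)
  have "(\<Sum>n<Suc m. artanh (1 / real (n + 2)) - 1 / real (n + 2)) =
     (\<Sum>n<m. artanh (1 / real (n + 2)) - 1 / real (n + 2)) + (artanh (1 / real (m + 2)) - 1 / real (m + 2))"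
    by simp
  also have "... = (ln (real m + 1) + ln (real m + 2)) / 2 - ln 2 / 2 - (harm (m + 1) - 1)
      + ((ln (real m + 3) - ln (real m + 1)) / 2 - 1 / (real m + 2))"
    unfolding Suc.IH artanh_term[of m] by (simp add: add_ac)
  also have "... = (ln (real (Suc m) + 1) + ln (real (Suc m) + 2)) / 2 - ln 2 / 2 - (harm (Suc m + 1) - 1)"
    by (simp add: h field_simps)
  finally show ?case .
qed

theorem corollary1p3:
  shows "summable (\<lambda>n::nat. artanh (1 / real (n + 2)) - 1 / real (n + 2)) \<and>
    (euler_mascheroni :: real) =
      1 - ln 2 / 2 - (\<Sum>n. artanh (1 / real (n + 2)) - 1 / real (n + 2))"
proof -
  define f where "f = (\<lambda>n::nat. artanh (1 / real (n + 2)) - 1 / real (n + 2))"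
  define L where "L = 1 - ln 2 / 2 - (euler_mascheroni :: real)"
  have e: "(\<lambda>m. harm (m + 1) - ln (real (m + 1)) :: real) \<longlonglongrightarrow> euler_mascheroni"
    using LIMSEQ_ignore_initial_segment[OF euler_mascheroni_LIMSEQ, of 1] by simp
  have d: "(\<lambda>m::nat. (ln (real m + 2) - ln (real m + 1)) / 2) \<longlonglongrightarrow> 0"
    by real_asymp
  have eq: "(\<lambda>m. sum f {..<m}) = (\<lambda>m. 1 - ln 2 / 2 -
        ((harm (m + 1) - ln (real (m + 1))) - (ln (real m + 2) - ln (real m + 1)) / 2))"
    unfolding f_def partial by (rule ext) (simp add: field_simps add_ac)
  have "(\<lambda>m. sum f {..<m}) \<longlonglongrightarrow> 1 - ln 2 / 2 - (euler_mascheroni - 0)"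
    unfolding eq by (intro tendsto_intros e d)
  then have s: "f sums L" unfolding sums_def L_def by simp
  then show ?thesis using sums_unique[OF s] unfolding f_def[symmetric] L_def
    by (auto simp: sums_summable)
qed

end
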